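(* Let $x_1\ge x_2\ge\cdots\ge x_n$ be integers and $q\ge1$ an integer, and suppose there is a set $S\subseteq[n]$ of size $2q$ such that all $x_i$ with $i\in S$ are equal. Increase $x_i$ by $1$ for $q$ of the indices $i\in S$ and decrease $x_i$ by $1$ for the other $q$ indices in $S$. Then $\Phi=\sum_{i=1}^n x_i^2$ increases by exactly $2q$, and $\Psi = n\sum_i|x_i| + \sum_{i<j}|x_i-x_j|$ increases by at least $2q^2$. *)

theory Defs
  imports Main
begin

definition Phi :: "nat \<Rightarrow> (nat \<Rightarrow> int) \<Rightarrow> int" where
  "Phi n x = (\<Sum>i\<in>{1..n}. (x i)^2)"

definition Psi :: "nat \<Rightarrow> (nat \<Rightarrow> int) \<Rightarrow> int" where
  "Psi n x = int n * (\<Sum>i\<in>{1..n}. \<bar>x i\<bar>)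
             + (\<Sum>(i,j)\<in>{(i,j). 1 \<le> i \<and> i < j \<and> j \<le> n}. \<bar>x i - x j\<bar>)"

end

theory Submission
  imports Defs
begin

lemma pairs_Suc:
  "{(i,j). 1 \<le> i \<and> i < j \<and> j \<le> Suc n} =
   {(i,j). 1 \<le> i \<and> i < j \<and> j \<le> n} \<union> (\<lambda>i. (i, Suc n)) ` {1..n}"
  by auto

lemma pair_sum_double:
  fixes f :: "nat \<Rightarrow> nat \<Rightarrow> int"
  assumes sym: "\<And>i j. f i j = f j i" and diag: "\<And>i. f i i = 0"
  shows "2 * (\<Sum>(i,j)\<in>{(i,j). 1 \<le> i \<and> i < j \<and> j \<le> n}. f i j)
         = (\<Sum>i\<in>{1..n}. \<Sum>j\<in>{1..n}. f i j)"
proof (induction n)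
  case 0
  have E0: "{(i,j). 1 \<le> i \<and> i < j \<and> j \<le> (0::nat)} = {}" by auto
  show ?case by (simp only: E0) simp
next
  case (Suc n)
  have fin: "finite {(i,j). 1 \<le> i \<and> i < j \<and> j \<le> n}"
    by (rule finite_subset[of _ "{1..n} \<times> {1..n}"]) auto
  have "(\<Sum>(i,j)\<in>{(i,j). 1 \<le> i \<and> i < j \<and> j \<le> Suc n}. f i j)
      = (\<Sum>(i,j)\<in>{(i,j). 1 \<le> i \<and> i < j \<and> j \<le> n}. f i j)
        + (\<Sum>(i,j)\<in>(\<lambda>i. (i, Suc n)) ` {1..n}. f i j)"
    unfolding pairs_Suc by (rule sum.union_disjoint) (use fin in auto)
  also have "(\<Sum>(i,j)\<in>(\<lambda>i. (i, Suc n)) ` {1..n}. f i j) = (\<Sum>i\<in>{1..n}. f i (Suc n))"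
    by (subst sum.reindex) (auto simp: inj_on_def)
  finally have A: "(\<Sum>(i,j)\<in>{(i,j). 1 \<le> i \<and> i < j \<and> j \<le> Suc n}. f i j)
      = (\<Sum>(i,j)\<in>{(i,j). 1 \<le> i \<and> i < j \<and> j \<le> n}. f i j) + (\<Sum>i\<in>{1..n}. f i (Suc n))" .
  have B: "(\<Sum>i\<in>{1..Suc n}. \<Sum>j\<in>{1..Suc n}. f i j)
     = (\<Sum>i\<in>{1..n}. \<Sum>j\<in>{1..n}. f i j) + (\<Sum>i\<in>{1..n}. f i (Suc n))
       + (\<Sum>j\<in>{1..n}. f (Suc n) j) + f (Suc n) (Suc n)"
    by (simp add: sum.distrib)
  have C: "(\<Sum>j\<in>{1..n}. f (Suc n) j) = (\<Sum>i\<in>{1..n}. f i (Suc n))"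
    using sym by simp
  show ?case using A B C Suc.IH diag by simp
qed

lemma split_sum:
  fixes F :: "nat \<Rightarrow> int"
  assumes "finite S" "U \<subseteq> S" "card U = q" "card (S - U) = q"
    "\<And>i. i \<in> U \<Longrightarrow> F i = a" "\<And>i. i \<in> S - U \<Longrightarrow> F i = b"
  shows "sum F S = int q * (a + b)"
proof -
  have "sum F S = sum F (S - U) + sum F U"
    using assms(1,2) by (simp add: sum.subset_diff)
  also have "sum F (S - U) = int q * b" using assms(4,6) by simp
  also have "sum F U = int q * a" using assms(3,5) by simp
  finally show ?thesis by (simp add: algebra_simps)
qed

theorem proposition6p2:
  fixes n q :: nat and x :: "nat \<Rightarrow> int" and S U :: "nat set"
  assumes sorted: "\<And>i j. 1 \<le> i \<Longrightarrow> i \<le> j \<Longrightarrow> j \<le> n \<Longrightarrow> x j \<le> x i"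
    and q: "q \<ge> 1"
    and S: "S \<subseteq> {1..n}" "card S = 2 * q"
    and eq: "\<And>i j. i \<in> S \<Longrightarrow> j \<in> S \<Longrightarrow> x i = x j"
    and U: "U \<subseteq> S" "card U = q"
  defines "y \<equiv> (\<lambda>i. if i \<in> U then x i + 1 else if i \<in> S then x i - 1 else x i)"
  shows "Phi n y = Phi n x + 2 * int q \<and> Psi n y \<ge> Psi n x + 2 * int q ^ 2"
proof -
  have finS: "finite S" using S(1) finite_subset by blast
  have finU: "finite U" using U(1) finS finite_subset by blast
  have cSU: "card (S - U) = q" using U S(2) finU by (simp add: card_Diff_subset)
  have "S \<noteq> {}" using S(2) q by auto
  then obtain s0 where s0: "s0 \<in> S" by blast
  define c where "c = x s0"
  have xc: "\<And>i. i \<in> S \<Longrightarrow> x i = c" using eq s0 c_def by blast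
  obtain u0 where u0: "u0 \<in> U" using U(2) q by (metis card.empty ex_in_conv not_one_le_zero)
  obtain w0 where w0: "w0 \<in> S - U" using cSU q by (metis card.empty ex_in_conv not_one_le_zero)
  have yU: "\<And>i. i \<in> U \<Longrightarrow> y i = c + 1 \<and> x i = c" using U(1) xc y_def by auto
  have ySU: "\<And>i. i \<in> S - U \<Longrightarrow> y i = c - 1 \<and> x i = c" using xc y_def by auto
  have ySU': "\<And>i. i \<in> S \<Longrightarrow> i \<notin> U \<Longrightarrow> y i = c - 1 \<and> x i = c" using xc y_def by auto
  have yN: "\<And>i. i \<notin> S \<Longrightarrow> y i = x i" using U(1) y_def by auto
  have SN: "\<And>F :: nat \<Rightarrow> int. sum F {1..n} = sum F S + sum F ({1..n} - S)"
    using S(1) by (simp add: sum.subset_diff)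
  have "Phi n y - Phi n x = (\<Sum>i\<in>{1..n}. (y i)^2 - (x i)^2)"
    unfolding Phi_def by (simp add: sum_subtractf)
  also have "\<dots> = (\<Sum>i\<in>S. (y i)^2 - (x i)^2)"
    using SN[of "\<lambda>i. (y i)^2 - (x i)^2"] yN by simp
  also have "\<dots> = int q * ((2*c+1) + (1 - 2*c))"
    by (rule split_sum[OF finS U cSU]) (simp_all add: yU ySU power2_eq_square algebra_simps)
  finally have P1: "Phi n y = Phi n x + 2 * int q" by simp
  have "(\<Sum>i\<in>{1..n}. \<bar>y i\<bar>) - (\<Sum>i\<in>{1..n}. \<bar>x i\<bar>) = (\<Sum>i\<in>{1..n}. \<bar>y i\<bar> - \<bar>x i\<bar>)"
    by (simp add: sum_subtractf)
  also have "\<dots> = (\<Sum>i\<in>S. \<bar>y i\<bar> - \<bar>x i\<bar>)"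
    using SN[of "\<lambda>i. \<bar>y i\<bar> - \<bar>x i\<bar>"] yN by simp
  also have "\<dots> = int q * ((\<bar>c+1\<bar> - \<bar>c\<bar>) + (\<bar>c-1\<bar> - \<bar>c\<bar>))"
    by (rule split_sum[OF finS U cSU]) (auto dest!: yU ySU ySU')
  also have "\<dots> \<ge> 0" by (intro mult_nonneg_nonneg) auto
  finally have A1: "int n * (\<Sum>i\<in>{1..n}. \<bar>x i\<bar>) \<le> int n * (\<Sum>i\<in>{1..n}. \<bar>y i\<bar>)"
    by (intro mult_left_mono) auto
  define g where "g i j = \<bar>y i - y j\<bar> - \<bar>x i - x j\<bar>" for i j
  define G where "G i = (\<Sum>j\<in>{1..n}. g i j)" for i
  have Gnot: "G i \<ge> 0" if "i \<notin> S" for i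
  proof -
    have "G i = (\<Sum>j\<in>S. g i j)"
      unfolding G_def using SN[of "g i"] yN that by (simp add: g_def)
    also have "\<dots> = int q * ((\<bar>x i - (c+1)\<bar> - \<bar>x i - c\<bar>) + (\<bar>x i - (c-1)\<bar> - \<bar>x i - c\<bar>))"
      by (rule split_sum[OF finS U cSU]) (auto dest!: yU ySU ySU' simp: g_def yN[OF that])
    also have "\<dots> \<ge> 0" by (intro mult_nonneg_nonneg) (auto simp: abs_if)
    finally show ?thesis .
  qed
  have GU: "G i = G u0" if "i \<in> U" for i
    unfolding G_def g_def using yU[OF that] yU[OF u0] by simp
  have GSU: "G i = G w0" if "i \<in> S - U" for i
    unfolding G_def g_def using ySU[OF that] ySU[OF w0] by simp
  have g1: "G u0 + G w0 = (\<Sum>j\<in>S. g u0 j + g w0 j) + (\<Sum>j\<in>{1..n} - S. g u0 j + g w0 j)"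
    unfolding G_def using SN[of "g u0"] SN[of "g w0"] by (simp add: sum.distrib)
  have g2: "(\<Sum>j\<in>S. g u0 j + g w0 j) = int q * ((0 + 2) + (2 + 0))"
    by (rule split_sum[OF finS U cSU]) (auto dest!: yU ySU ySU' simp: g_def yU[OF u0] ySU[OF w0])
  have g3: "(\<Sum>j\<in>{1..n} - S. g u0 j + g w0 j) \<ge> 0"
    by (rule sum_nonneg) (auto simp: g_def yU[OF u0] ySU[OF w0] yN abs_if)
  have Guw: "G u0 + G w0 \<ge> 4 * int q" using g1 g2 g3 by simp
  have h1: "(\<Sum>i\<in>{1..n}. G i) = (\<Sum>i\<in>S. G i) + (\<Sum>i\<in>{1..n} - S. G i)" by (rule SN)
  have h2: "(\<Sum>i\<in>S. G i) = int q * (G u0 + G w0)"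
    by (rule split_sum[OF finS U cSU]) (auto simp: GU GSU)
  have h3: "(\<Sum>i\<in>{1..n} - S. G i) \<ge> 0" by (rule sum_nonneg) (auto intro: Gnot)
  have h4: "int q * (4 * int q) \<le> int q * (G u0 + G w0)"
    using Guw by (intro mult_left_mono) auto
  have "(\<Sum>i\<in>{1..n}. G i) \<ge> int q * (4 * int q)"
    using h1 h2 h3 h4 by linarith
  hence D: "2 * (\<Sum>(i,j)\<in>{(i,j). 1 \<le> i \<and> i < j \<and> j \<le> n}. g i j) \<ge> 4 * int q ^ 2"
    unfolding G_def by (subst pair_sum_double) (auto simp: g_def power2_eq_square abs_minus_commute)
  have E: "(\<Sum>(i,j)\<in>{(i,j). 1 \<le> i \<and> i < j \<and> j \<le> n}. \<bar>y i - y j\<bar>)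
     = (\<Sum>(i,j)\<in>{(i,j). 1 \<le> i \<and> i < j \<and> j \<le> n}. \<bar>x i - x j\<bar>)
       + (\<Sum>(i,j)\<in>{(i,j). 1 \<le> i \<and> i < j \<and> j \<le> n}. g i j)"
    by (simp add: g_def case_prod_beta sum.distrib[symmetric])
  have "Psi n y \<ge> Psi n x + 2 * int q ^ 2"
    unfolding Psi_def using A1 D E by linarith
  with P1 show ?thesis by blast
qed

end
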